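(* Let $f \in \mathbb{Q}[X,Y]$ be square-free with $d := \deg_Y f \ge 2$ and with leading coefficient of $f$ with respect to $Y$ a nonzero rational constant. Let $\mathrm{Sr}_k(X,Y)=\sum_{j=0}^k \mathrm{sr}_{k,j}(X)Y^j$ ($0\le k\le d-1$) be the subresultant polynomials of $f$ and $\partial_Y f$ with respect to $Y$, and let $\Gamma_1,\dots,\Gamma_{d-1}\in\mathbb{Q}[X]$ be defined as in the context. Then the curve $\mathcal{C}(f)=\{(\alpha,\beta)\in\mathbb{R}^2 : f(\alpha,\beta)=0\}$ is in generic position for the $x$-direction if and only if for every $k\in\{1,\dots,d-1\}$ and every $i\in\{0,\dots,k-1\}$ the polynomial $$k(k-i)\,\mathrm{sr}_{k,i}(X)\,\mathrm{sr}_{k,k}(X)-(i+1)\,\mathrm{sr}_{k,k-1}(X)\,\mathrm{sr}_{k,i+1}(X)$$ is divisible by $\Gamma_k(X)$ in $\mathbb{Q}[X]$.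
   Context: Subresultants: let $\mathbb{A}$ be an integral domain, $P=\sum_{i=0}^p a_iT^i$, $Q=\sum_{i=0}^q b_iT^i\in\mathbb{A}[T]$ with $a_pb_q\neq 0$ and $p>q$. For $0\le k\le q$, let $M_k(P,Q)$ be the $(p+q-2k)\times(p+q-k)$ matrix whose rows are the coefficient vectors, in the basis $1,T,\dots,T^{p+q-k-1}$ (columns indexed $0,\dots,p+q-k-1$), of $P,TP,\dots,T^{q-k-1}P$ followed by $Q,TQ,\dots,T^{p-k-1}Q$. For $0\le j\le k$, $\mathrm{sr}_{k,j}$ is the determinant of the square matrix formed by column $j$ followed by the last $p+q-2k-1$ columns (indices $k+1,\dots,p+q-k-1$) of $M_k(P,Q)$. The $k$-th subresultant polynomial is $\mathrm{Sr}_k=\sum_{j=0}^k\mathrm{sr}_{k,j}T^j$, and $\mathrm{sr}_{k,k}$ is its principal coefficient; $\mathrm{Sr}_0=\mathrm{sr}_{0,0}$ is the resultant. Here $\mathbb{A}=\mathbb{Q}[X]$, $T=Y$, $P=f$, $Q=\partial_Y f$. Define $\Phi_0(X)=\mathrm{sr}_{0,0}(X)/\gcd(\mathrm{sr}_{0,0}(X),\mathrm{sr}_{0,0}'(X))$ and for $i=1,\dots,d-1$: $\Phi_i=\gcd(\Phi_{i-1},\mathrm{sr}_{i,i})$, $\Gamma_i=\Phi_{i-1}/\Phi_i$ (gcds in $\mathbb{Q}[X]$, up to nonzero constants). Generic position for the $x$-direction: for every $\alpha\in\mathbb{C}$ there is at most one $\beta\in\mathbb{C}$ with $f(\alpha,\beta)=\partial_Yf(\alpha,\beta)=0$,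 and no asymptotic direction of the curve is parallel to the $y$-axis (the latter is automatic when the leading coefficient of $f$ in $Y$ is a nonzero constant). *)

theory Defs
  imports "Jordan_Normal_Form.Determinant"
    "HOL-Computational_Algebra.Polynomial_Factorial"
    "HOL-Computational_Algebra.Squarefree"
    "HOL-Computational_Algebra.Field_as_Ring"
    Complex_Main
begin

text \<open>Bivariate polynomials in Q[X,Y] are represented as rat poly poly:
  polynomials in the outer variable Y whose coefficients are in Q[X].\<close>

text \<open>The (k,j) subresultant coefficient sr_{k,j}(P,Q), p = degree P > q = degree Q:
  determinant of the square matrix of size p+q-2k formed by column j followed by
  columns k+1,...,p+q-k-1 of the matrix M_k(P,Q) whose rows are the coefficient
  vectors of P, TP, ..., T^(q-k-1) P, Q, TQ, ..., T^(p-k-1) Q.\<close>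

definition subres_matrix :: "'a::comm_ring_1 poly \<Rightarrow> 'a poly \<Rightarrow> nat \<Rightarrow> nat \<Rightarrow> nat \<Rightarrow> 'a" where
  "subres_matrix P Q k r c =
     (if r < degree Q - k then (if r \<le> c then coeff P (c - r) else 0)
      else (if r - (degree Q - k) \<le> c then coeff Q (c - (r - (degree Q - k))) else 0))"

definition subres_coeff :: "'a::comm_ring_1 poly \<Rightarrow> 'a poly \<Rightarrow> nat \<Rightarrow> nat \<Rightarrow> 'a" where
  "subres_coeff P Q k j =
     (let n = degree P + degree Q - 2 * k
      in det (mat n n (\<lambda>(r, c). subres_matrix P Q k r (if c = 0 then j else k + c))))"

definition sr :: "rat poly poly \<Rightarrow> nat \<Rightarrow> nat \<Rightarrow> rat poly" where
  "sr f k j = subres_coeff f (pderiv f) k j"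

fun Phi :: "rat poly poly \<Rightarrow> nat \<Rightarrow> rat poly" where
  "Phi f 0 = sr f 0 0 div gcd (sr f 0 0) (pderiv (sr f 0 0))"
| "Phi f (Suc i) = gcd (Phi f i) (sr f (Suc i) (Suc i))"

definition Gamma :: "rat poly poly \<Rightarrow> nat \<Rightarrow> rat poly" where
  "Gamma f i = Phi f (i - 1) div Phi f i"

definition eval2 :: "rat poly poly \<Rightarrow> complex \<Rightarrow> complex \<Rightarrow> complex" where
  "eval2 f a b = poly (map_poly (\<lambda>c. poly (map_poly of_rat c) a) f) b"

text \<open>Generic position for the x-direction: above each complex alpha there is at most one
  complex beta with f(alpha,beta) = df/dY(alpha,beta) = 0.  (The condition on vertical
  asymptotic directions is automatic under the standing hypothesis that the leading
  coefficient of f in Y is a nonzero constant.)\<close>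
definition generic_position_x :: "rat poly poly \<Rightarrow> bool" where
  "generic_position_x f \<longleftrightarrow>
     (\<forall>a b1 b2. eval2 f a b1 = 0 \<and> eval2 (pderiv f) a b1 = 0 \<and>
                eval2 f a b2 = 0 \<and> eval2 (pderiv f) a b2 = 0 \<longrightarrow> b1 = b2)"

end

theory Submission
  imports Defs "Jordan_Normal_Form.Char_Poly"
begin

lemma rowpoly:
  fixes F G :: "'a::comm_ring_1 poly"
  assumes k: "k \<le> degree G" and r: "r < degree F + degree G - 2*k"
  shows "(\<Sum>c<degree F + degree G - k. monom (subres_matrix F G k r c) c) =
    (if r < degree G - k then monom 1 r * F else monom 1 (r - (degree G - k)) * G)"
proof (rule poly_eqI)
  fix i
  let ?N = "degree F + degree G - k"
  have "coeff (\<Sum>c<?N. monom (subres_matrix F G k r c) c) i =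
     (\<Sum>c<?N. if c = i then subres_matrix F G k r c else 0)"
    by (simp add: coeff_sum coeff_monom)
  also have "\<dots> = (if i < ?N then subres_matrix F G k r i else 0)"
    by (simp add: sum.delta)
  finally have L: "coeff (\<Sum>c<?N. monom (subres_matrix F G k r c) c) i =
     (if i < ?N then subres_matrix F G k r i else 0)" .
  show "coeff (\<Sum>c<?N. monom (subres_matrix F G k r c) c) i =
    coeff (if r < degree G - k then monom 1 r * F else monom 1 (r - (degree G - k)) * G) i"
  proof (cases "r < degree G - k")
    case True
    show ?thesis unfolding L using True k r
      by (auto simp: coeff_monom_mult subres_matrix_def coeff_eq_0)
  next
    case False
    show ?thesis unfolding L using False k r
      by (auto simp: coeff_monom_mult subres_matrix_def coeff_eq_0)
  qed
qed


lemma const_poly_hom: "comm_ring_hom (\<lambda>a::'a::comm_ring_1. [:a:])"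
  by unfold_locales (auto simp: pCons_one)

lemma subres_dvd:
  fixes F G D :: "'a::comm_ring_1 poly"
  assumes k: "k \<le> degree G" and pq: "degree G < degree F"
    and DF: "D dvd F" and DG: "D dvd G"
  shows "D dvd (\<Sum>j\<le>k. monom (subres_coeff F G k j) j)"
proof -
  define n where "n = degree F + degree G - 2*k"
  define M where "M = subres_matrix F G k"
  define A where "A = mat n n (\<lambda>(r,c). if c = 0 then (\<Sum>j\<le>k. monom (M r j) j) else [:M r (k+c):])"
  define x where "x = vec n (\<lambda>c. if c = 0 then 1 else monom (1::'a) (k+c))"
  define B where "B = (\<lambda>j. mat n n (\<lambda>(r,c). [:M r (if c = 0 then j else k+c):]))"
  have n0: "0 < n" using k pq unfolding n_def by auto
  have A: "A \<in> carrier_mat n n" unfolding A_def by auto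
  have x: "x \<in> carrier_vec n" unfolding x_def by auto
  have rp: "(A *\<^sub>v x) $ r = (if r < degree G - k then monom 1 r * F else monom 1 (r - (degree G - k)) * G)"
    if r: "r < n" for r
  proof -
    have "(A *\<^sub>v x) $ r = (\<Sum>c<n. A $$ (r,c) * x $ c)"
      using r A x by (simp add: scalar_prod_def lessThan_atLeast0)
    also have "\<dots> = A $$ (r,0) * x $ 0 + (\<Sum>c\<in>{1..<n}. A $$ (r,c) * x $ c)"
      using n0 by (simp add: lessThan_atLeast0 sum.atLeast_Suc_lessThan)
    also have "(\<Sum>c\<in>{1..<n}. A $$ (r,c) * x $ c) = (\<Sum>c\<in>{1..<n}. monom (M r (k+c)) (k+c))"
      using r by (intro sum.cong) (auto simp: A_def x_def smult_monom)
    also have "\<dots> = (\<Sum>c\<in>{k+1..<k+n}. monom (M r c) c)"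
      by (rule sum.reindex_bij_witness[of _ "\<lambda>c. c - k" "\<lambda>c. k + c"]) auto
    also have "A $$ (r,0) * x $ 0 = (\<Sum>j\<le>k. monom (M r j) j)"
      using r n0 by (simp add: A_def x_def)
    also have "(\<Sum>j\<le>k. monom (M r j) j) + (\<Sum>c\<in>{k+1..<k+n}. monom (M r c) c)
        = (\<Sum>c<degree F + degree G - k. monom (M r c) c)"
    proof -
      have "{..<degree F + degree G - k} = {..k} \<union> {k+1..<k+n}" using k pq unfolding n_def by auto
      hence "(\<Sum>c<degree F + degree G - k. monom (M r c) c) = (\<Sum>c\<in>{..k} \<union> {k+1..<k+n}. monom (M r c) c)"
        by simp
      also have "\<dots> = (\<Sum>j\<le>k. monom (M r j) j) + (\<Sum>c\<in>{k+1..<k+n}. monom (M r c) c)"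
        by (rule sum.union_disjoint) auto
      finally show ?thesis by simp
    qed
    also have "\<dots> = (if r < degree G - k then monom 1 r * F else monom 1 (r - (degree G - k)) * G)"
      unfolding M_def by (rule rowpoly[OF k r[unfolded n_def]])
    finally show ?thesis .
  qed
  have dvdAx: "D dvd (A *\<^sub>v x) $ r" if "r < n" for r
    unfolding rp[OF that] using DF DG by auto
  have "(adj_mat A * A) *\<^sub>v x = adj_mat A *\<^sub>v (A *\<^sub>v x)"
    using adj_mat(1)[OF A] A x by simp
  hence "((adj_mat A * A) *\<^sub>v x) $ 0 = (adj_mat A *\<^sub>v (A *\<^sub>v x)) $ 0" by simp
  also have "((adj_mat A * A) *\<^sub>v x) $ 0 = det A"
  proof -
    have "((adj_mat A * A) *\<^sub>v x) $ 0 = (\<Sum>c<n. (det A \<cdot>\<^sub>m 1\<^sub>m n) $$ (0,c) * x $ c)"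
      unfolding adj_mat(3)[OF A] using n0 x by (simp add: scalar_prod_def lessThan_atLeast0)
    also have "\<dots> = (\<Sum>c<n. if c = 0 then det A else 0)"
      using n0 by (intro sum.cong) (auto simp: x_def)
    finally show ?thesis using n0 by simp
  qed
  finally have detA: "det A = (\<Sum>r<n. adj_mat A $$ (0,r) * (A *\<^sub>v x) $ r)"
    using n0 adj_mat(1)[OF A] A x by (simp add: scalar_prod_def lessThan_atLeast0)
  have "D dvd det A" unfolding detA
    by (intro dvd_sum) (simp add: dvdAx)
  moreover have "det A = (\<Sum>j\<le>k. monom (subres_coeff F G k j) j)"
  proof -
    interpret h: comm_ring_hom "\<lambda>a::'a. [:a:]" by (rule const_poly_hom)
    have cof: "cofactor A i 0 = cofactor (B j) i 0" if "i < n" for i j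
      unfolding cofactor_def
      by (rule arg_cong[of _ _ "\<lambda>m. (-1)^(i+0) * det m"], rule eq_matI)
        (auto simp: mat_delete_def A_def B_def)
    have detB: "det (B j) = [:subres_coeff F G k j:]" for j
    proof -
      have "B j = map_mat (\<lambda>a. [:a:]) (mat n n (\<lambda>(r,c). M r (if c = 0 then j else k+c)))"
        unfolding B_def by (rule eq_matI) auto
      thus ?thesis unfolding subres_coeff_def Let_def M_def n_def
        by (simp add: M_def n_def)
    qed
    have "det A = (\<Sum>i<n. A $$ (i,0) * cofactor A i 0)"
      by (rule laplace_expansion_column[OF A n0])
    also have "\<dots> = (\<Sum>i<n. (\<Sum>j\<le>k. [:M i j:] * monom 1 j) * cofactor (B 0) i 0)"
      using cof by (intro sum.cong) (auto simp: A_def smult_monom)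
    also have "\<dots> = (\<Sum>i<n. \<Sum>j\<le>k. [:M i j:] * monom 1 j * cofactor (B 0) i 0)"
      by (simp add: sum_distrib_right)
    also have "\<dots> = (\<Sum>j\<le>k. \<Sum>i<n. [:M i j:] * monom 1 j * cofactor (B 0) i 0)"
      by (rule sum.swap)
    also have "\<dots> = (\<Sum>j\<le>k. (\<Sum>i<n. (B j) $$ (i,0) * cofactor (B j) i 0) * monom 1 j)"
      unfolding sum_distrib_right
    proof (intro sum.cong refl)
      fix j i assume "i \<in> {..<n}"
      hence i: "i < n" by auto
      show "[:M i j:] * monom 1 j * cofactor (B 0) i 0 = B j $$ (i, 0) * cofactor (B j) i 0 * monom 1 j"
        using i n0 cof[OF i, of 0] cof[OF i, of j] by (simp add: B_def ac_simps)
    qed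
    also have "\<dots> = (\<Sum>j\<le>k. det (B j) * monom 1 j)"
      by (intro sum.cong refl, subst laplace_expansion_column[of _ n 0]) (auto simp: B_def n0)
    also have "\<dots> = (\<Sum>j\<le>k. monom (subres_coeff F G k j) j)"
      by (simp add: detB smult_monom)
    finally show ?thesis .
  qed
  ultimately show ?thesis by simp
qed


lemma subres_nonzero_gen:
  fixes F G D :: "'a::{factorial_ring_gcd,semiring_gcd_mult_normalize} poly"
  assumes pq: "degree G < degree F" and G0: "G \<noteq> 0"
    and D0: "D \<noteq> 0" and DF: "D dvd F" and DG: "D dvd G"
    and cop: "coprime (F div D) (G div D)"
  shows "subres_coeff F G (degree D) (degree D) \<noteq> 0"
proof
  define g where "g = degree D"
  define p where "p = degree F"
  define q where "q = degree G"
  define n where "n = p + q - 2*g"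
  define M where "M = subres_matrix F G g"
  define Mp where "Mp = mat n n (\<lambda>(r,c). M r (if c = 0 then g else g + c))"
  assume "subres_coeff F G (degree D) (degree D) = 0"
  hence "det Mp = 0" unfolding subres_coeff_def Let_def Mp_def M_def n_def p_def q_def g_def .
  have gq: "g \<le> q" unfolding g_def q_def using DG G0 by (simp add: dvd_imp_degree_le)
  have Mp: "Mp \<in> carrier_mat n n" unfolding Mp_def by auto
  have "det (transpose_mat Mp) = 0" using \<open>det Mp = 0\<close> det_transpose[OF Mp] by simp
  then obtain v where v: "v \<in> carrier_vec n" "v \<noteq> 0\<^sub>v n" "transpose_mat Mp *\<^sub>v v = 0\<^sub>v n"
    using det_0_iff_vec_prod_zero[of "transpose_mat Mp" n] Mp by auto
  have kern: "(\<Sum>r<n. M r (g + c) * v $ r) = 0" if c: "c < n" for c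
  proof -
    have "(transpose_mat Mp *\<^sub>v v) $ c = 0" using v(3) c by simp
    moreover have "(transpose_mat Mp *\<^sub>v v) $ c = (\<Sum>r<n. Mp $$ (r,c) * v $ r)"
      using c v(1) Mp by (simp add: scalar_prod_def lessThan_atLeast0)
    moreover have "(\<Sum>r<n. Mp $$ (r,c) * v $ r) = (\<Sum>r<n. M r (g + c) * v $ r)"
      using c by (intro sum.cong) (auto simp: Mp_def)
    ultimately show ?thesis by simp
  qed
  define N where "N = p + q - g"
  define W where "W = (\<Sum>r<n. smult (v $ r) (\<Sum>c<N. monom (M r c) c))"
  have coeffW: "coeff W i = 0" if i: "g \<le> i" for i
  proof -
    have "coeff W i = (\<Sum>r<n. v $ r * (if i < N then M r i else 0))"
      unfolding W_def by (simp add: coeff_sum coeff_monom sum.delta)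
    also have "\<dots> = 0"
    proof (cases "i < N")
      case True
      hence "i - g < n" "g + (i - g) = i" using i gq unfolding N_def n_def by auto
      with kern[of "i - g"] show ?thesis using True by (simp add: ac_simps)
    qed simp
    finally show ?thesis .
  qed
  define U where "U = (\<Sum>r<q-g. smult (v $ r) (monom 1 r))"
  define V where "V = (\<Sum>r<p-g. smult (v $ (q - g + r)) (monom 1 r))"
  have WUV: "W = U * F + V * G"
  proof -
    have rp: "(\<Sum>c<N. monom (M r c) c) =
      (if r < q - g then monom 1 r * F else monom 1 (r - (q - g)) * G)" if "r < n" for r
      using rowpoly[of g G r F] that gq unfolding M_def N_def n_def p_def q_def by auto
    have "W = (\<Sum>r<n. smult (v $ r) (if r < q - g then monom 1 r * F else monom 1 (r - (q - g)) * G))"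
      unfolding W_def by (intro sum.cong) (auto simp: rp)
    also have "{..<n} = {..<q-g} \<union> {q-g..<n}" using gq pq unfolding n_def p_def q_def by auto
    also have "(\<Sum>r\<in>{..<q-g} \<union> {q-g..<n}. smult (v $ r) (if r < q - g then monom 1 r * F else monom 1 (r - (q - g)) * G))
      = (\<Sum>r<q-g. smult (v $ r) (monom 1 r * F)) + (\<Sum>r\<in>{q-g..<n}. smult (v $ r) (monom 1 (r - (q - g)) * G))"
      by (subst sum.union_disjoint) (auto intro!: sum.cong)
    also have "(\<Sum>r\<in>{q-g..<n}. smult (v $ r) (monom 1 (r - (q - g)) * G)) = (\<Sum>r<p-g. smult (v $ (q - g + r)) (monom 1 r * G))"
      by (rule sum.reindex_bij_witness[of _ "\<lambda>r. q - g + r" "\<lambda>r. r - (q - g)"]) (use gq pq in \<open>auto simp: n_def p_def q_def\<close>)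
    finally show ?thesis unfolding U_def V_def by (simp add: sum_distrib_right)
  qed
  have W0: "W = 0"
  proof (rule ccontr)
    assume "W \<noteq> 0"
    have "D dvd W" unfolding WUV using DF DG by auto
    hence "g \<le> degree W" unfolding g_def using \<open>W \<noteq> 0\<close> by (simp add: dvd_imp_degree_le)
    hence "coeff W (degree W) = 0" using coeffW by auto
    thus False using \<open>W \<noteq> 0\<close> by simp
  qed
  define F1 where "F1 = F div D"
  define G1 where "G1 = G div D"
  have F1: "F = D * F1" unfolding F1_def using DF by simp
  have G1: "G = D * G1" unfolding G1_def using DG by simp
  have cop: "coprime F1 G1" unfolding F1_def G1_def using cop .
  have "D * (U * F1 + V * G1) = 0" using W0 unfolding WUV F1 G1 by (simp add: algebra_simps)
  hence eq: "U * F1 = - (V * G1)" using D0 by (simp add: eq_neg_iff_add_eq_0)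
  have degG1: "degree G1 = q - g" unfolding q_def g_def using G1 D0 G0 by (metis degree_mult_eq add_diff_cancel_left' mult_zero_right)
  have "G1 dvd U * F1" unfolding eq by simp
  hence "G1 dvd U" using cop by (simp add: coprime_dvd_mult_left_iff coprime_commute)
  have degU: "U = 0 \<or> degree U < q - g"
  proof (cases "q - g = 0")
    case True thus ?thesis unfolding U_def by simp
  next
    case False
    have "degree U \<le> q - g - 1" unfolding U_def
      by (intro degree_sum_le) (auto intro: order.trans[OF degree_smult_le] simp: degree_monom_eq)
    thus ?thesis using False by auto
  qed
  have U0: "U = 0"
  proof (rule ccontr)
    assume "U \<noteq> 0"
    with \<open>G1 dvd U\<close> have "degree G1 \<le> degree U" by (simp add: dvd_imp_degree_le)
    with degU degG1 \<open>U \<noteq> 0\<close> show False by auto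
  qed
  have V0: "V = 0" using W0 U0 G0 unfolding WUV by simp
  have "v = 0\<^sub>v n"
  proof (rule eq_vecI)
    fix r assume r: "r < dim_vec (0\<^sub>v n)"
    hence r: "r < n" by simp
    show "v $ r = 0\<^sub>v n $ r"
    proof (cases "r < q - g")
      case True
      have "coeff U r = v $ r" unfolding U_def using True
        by (simp add: coeff_sum coeff_monom if_distrib[of "\<lambda>x. v $ _ * x"] sum.delta cong: if_cong)
      thus ?thesis using U0 r by simp
    next
      case False
      have "coeff V (r - (q - g)) = v $ (q - g + (r - (q - g)))" unfolding V_def using False r
        by (simp add: coeff_sum coeff_monom if_distrib[of "\<lambda>x. v $ _ * x"] sum.delta n_def cong: if_cong)
      thus ?thesis using V0 r False by simp
    qed
  qed (use v in auto)
  with v(2) show False by simp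
qed

lemma subres_gcd_nonzero:
  fixes F G :: "complex poly"
  assumes pq: "degree G < degree F" and G0: "G \<noteq> 0"
  shows "subres_coeff F G (degree (gcd F G)) (degree (gcd F G)) \<noteq> 0"
  by (rule subres_nonzero_gen[OF pq G0]) (use G0 in \<open>auto intro: div_gcd_coprime\<close>)

lemma subres_coprime_nonzero:
  fixes F G :: "'a::{factorial_ring_gcd,semiring_gcd_mult_normalize} poly"
  assumes pq: "degree G < degree F" and G0: "G \<noteq> 0" and cop: "coprime F G"
  shows "subres_coeff F G 0 0 \<noteq> 0"
  using subres_nonzero_gen[OF pq G0, of 1] cop by simp


lemma coprime_pderiv_bivar:
  fixes f :: "rat poly poly"
  assumes sf: "squarefree f" and lc0: "degree (lead_coeff f) = 0" "lead_coeff f \<noteq> 0"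
  shows "coprime f (pderiv f)"
proof (rule ccontr)
  assume "\<not> coprime f (pderiv f)"
  then obtain c where c: "c dvd f" "c dvd pderiv f" "\<not> is_unit c" by (rule not_coprimeE)
  have f0: "f \<noteq> 0" using lc0 by auto
  have c0: "c \<noteq> 0" using c f0 by auto
  obtain p where p: "p dvd c" "prime p" using prime_divisor_exists[OF c0 c(3)] by auto
  have pf: "p dvd f" and pf': "p dvd pderiv f" using p c dvd_trans by blast+
  from pf obtain h where h: "f = p * h" by (elim dvdE)
  have "pderiv f = pderiv p * h + p * pderiv h" unfolding h by (simp add: pderiv_mult)
  with pf' have "p dvd pderiv p * h" by (metis dvd_add_times_triv_right_iff mult.commute)
  hence "p dvd pderiv p \<or> p dvd h" using p(2) by (simp add: prime_dvd_mult_iff)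
  thus False
  proof
    assume "p dvd h"
    hence "p^2 dvd f" unfolding h by (simp add: power2_eq_square)
    hence "is_unit p" using sf squarefreeD by blast
    thus False using p(2) by simp
  next
    assume pp: "p dvd pderiv p"
    have "pderiv p = 0"
    proof (rule ccontr)
      assume "pderiv p \<noteq> 0"
      hence "degree p \<le> degree (pderiv p)" using pp by (simp add: dvd_imp_degree_le)
      moreover have "degree p \<noteq> 0" using \<open>pderiv p \<noteq> 0\<close> pderiv_eq_0_iff by blast
      ultimately show False by (simp add: degree_pderiv)
    qed
    hence "degree p = 0" using pderiv_eq_0_iff by blast
    then obtain a where a: "p = [:a:]" by (metis degree_eq_zeroE)
    have "a dvd coeff f (degree f)" using pf unfolding a const_poly_dvd_iff by blast
    moreover obtain b where b: "lead_coeff f = [:b:]" "b \<noteq> 0" using lc0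
      by (metis degree_eq_zeroE pCons_0_0)
    ultimately have ab: "a dvd [:b:]" by (simp only: b(1))
    have "is_unit [:b:]" using b(2) by (simp add: is_unit_const_poly_iff)
    hence "is_unit a" using ab dvd_unit_imp_unit by blast
    hence "is_unit p" unfolding a by (simp add: is_unit_const_poly_iff)
    thus False using p(2) by simp
  qed
qed


interpretation mch: map_poly_idom_hom "of_rat :: rat \<Rightarrow> complex" ..
interpretation ofr': field_hom' "of_rat :: rat \<Rightarrow> complex" ..

definition mapc :: "rat poly \<Rightarrow> complex poly" where "mapc = map_poly of_rat"
definition ev :: "complex \<Rightarrow> rat poly \<Rightarrow> complex" where "ev a c = poly (mapc c) a"

lemma ev_hom: "comm_ring_hom (ev a)"
  by unfold_locales (simp_all add: ev_def mapc_def mch.hom_mult mch.hom_add)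

interpretation evh: comm_ring_hom "ev a" for a by (rule ev_hom)


lemma ev_const: "degree c = 0 \<Longrightarrow> ev a c = of_rat (coeff c 0)"
  by (metis degree_eq_zeroE ev_def mapc_def of_rat_hom.map_poly_pCons_hom map_poly_0 poly_pCons poly_0 mult_zero_right add.right_neutral coeff_pCons_0)

lemma degree_map_ev:
  assumes "ev a (lead_coeff P) \<noteq> 0"
  shows "degree (map_poly (ev a) P) = degree P"
  by (rule Ring_Hom_Poly.degree_map_poly) (use assms in auto)

lemma coeff_map_ev: "coeff (map_poly (ev a) P) i = ev a (coeff P i)"
  by (simp add: coeff_map_poly)

lemma sr_ev:
  assumes dF: "degree (map_poly (ev a) f) = degree f"
    and dG: "degree (map_poly (ev a) (pderiv f)) = degree (pderiv f)"
  shows "ev a (sr f k j) = subres_coeff (map_poly (ev a) f) (map_poly (ev a) (pderiv f)) k j"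
proof -
  let ?n = "degree f + degree (pderiv f) - 2 * k"
  have "ev a (sr f k j) = det (map_mat (ev a) (mat ?n ?n (\<lambda>(r, c). subres_matrix f (pderiv f) k r (if c = 0 then j else k + c))))"
    unfolding sr_def subres_coeff_def Let_def by simp
  also have "map_mat (ev a) (mat ?n ?n (\<lambda>(r, c). subres_matrix f (pderiv f) k r (if c = 0 then j else k + c)))
    = mat ?n ?n (\<lambda>(r, c). subres_matrix (map_poly (ev a) f) (map_poly (ev a) (pderiv f)) k r (if c = 0 then j else k + c))"
    by (rule eq_matI) (auto simp: subres_matrix_def dG coeff_map_ev)
  finally show ?thesis unfolding subres_coeff_def Let_def dF dG .
qed


lemma mapc_pderiv: "mapc (pderiv P) = pderiv (mapc P)"
  unfolding mapc_def by (rule of_rat_hom.map_poly_pderiv)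

lemma mapc_gcd: "mapc (gcd P Q) = gcd (mapc P) (mapc Q)"
  unfolding mapc_def by (rule ofr'.map_poly_gcd)

lemma mapc_mult: "mapc (P * Q) = mapc P * mapc Q"
  unfolding mapc_def by (rule mch.hom_mult)

lemma mapc_eq_0: "mapc P = 0 \<longleftrightarrow> P = 0"
  unfolding mapc_def by simp

lemma mapc_dvd: "mapc P dvd mapc Q \<Longrightarrow> P dvd Q"
  unfolding mapc_def by (rule of_rat_hom.dvd_map_poly_hom_imp_dvd)

lemma mapc_dvd_mono: "P dvd Q \<Longrightarrow> mapc P dvd mapc Q"
  by (metis dvd_def mapc_mult)

lemma ev_mapc: "ev a P = poly (mapc P) a" unfolding ev_def ..

lemma sqf_part_order:
  fixes P :: "rat poly"
  assumes P0: "P \<noteq> 0" and root: "poly (mapc P) \<alpha> = 0"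
  shows "order \<alpha> (mapc (P div gcd P (pderiv P))) = 1"
proof -
  define Q where "Q = P div gcd P (pderiv P)"
  define Gd where "Gd = gcd P (pderiv P)"
  define Pc where "Pc = mapc P"
  have Pc0: "Pc \<noteq> 0" unfolding Pc_def using P0 by (simp add: mapc_eq_0)
  have "degree Pc \<noteq> 0"
  proof
    assume "degree Pc = 0"
    then obtain c where "Pc = [:c:]" by (metis degree_eq_zeroE)
    with root Pc0 show False unfolding Pc_def by auto
  qed
  hence Pc'0: "pderiv Pc \<noteq> 0" using pderiv_eq_0_iff[of Pc] by auto
  define m where "m = order \<alpha> Pc"
  have m: "m = Suc (order \<alpha> (pderiv Pc))" unfolding m_def using order_pderiv[OF Pc0] root Pc_def by simp
  define Gc where "Gc = gcd Pc (pderiv Pc)"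
  have GcGd: "Gc = mapc Gd" unfolding Gc_def Gd_def Pc_def by (simp add: mapc_gcd mapc_pderiv)
  have Gc0: "Gc \<noteq> 0" unfolding Gc_def using Pc0 by simp
  have "[:-\<alpha>,1:]^(m-1) dvd pderiv Pc" using m order_1[of \<alpha> "pderiv Pc"] by simp
  moreover have "[:-\<alpha>,1:]^(m-1) dvd Pc" using order_1[of \<alpha> Pc] unfolding m_def[symmetric]
    by (meson diff_le_self dvd_trans le_imp_power_dvd)
  ultimately have "[:-\<alpha>,1:]^(m-1) dvd Gc" unfolding Gc_def by simp
  hence o1: "m - 1 \<le> order \<alpha> Gc" using Gc0 by (simp add: order_divides)
  have "order \<alpha> Gc \<le> order \<alpha> (pderiv Pc)" using Pc'0 by (intro dvd_imp_order_le) (auto simp: Gc_def)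
  hence oG: "order \<alpha> Gc = m - 1" using o1 m by simp
  have "P = Q * Gd" unfolding Q_def Gd_def by simp
  hence "Pc = mapc Q * Gc" unfolding Pc_def GcGd by (simp add: mapc_mult)
  hence "m = order \<alpha> (mapc Q) + order \<alpha> Gc" unfolding m_def using Pc0
    by (metis order_mult)
  with oG m show ?thesis unfolding Q_def by simp
qed

lemma dvd_by_roots:
  fixes R S :: "complex poly"
  assumes "R \<noteq> 0" "\<And>\<alpha>. order \<alpha> R \<le> 1" "\<And>\<alpha>. poly R \<alpha> = 0 \<Longrightarrow> poly S \<alpha> = 0"
  shows "R dvd S"
  using assms
proof (induction "degree R" arbitrary: R S rule: less_induct)
  case less
  show ?case
  proof (cases "degree R = 0")
    case True
    then obtain c where c: "R = [:c:]" by (metis degree_eq_zeroE)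
    with less.prems(1) have "is_unit R" by (simp add: is_unit_const_poly_iff)
    thus ?thesis by (rule unit_imp_dvd)
  next
    case False
    hence "\<not> constant (poly R)" by (simp add: constant_degree)
    then obtain \<alpha> where a: "poly R \<alpha> = 0" using fundamental_theorem_of_algebra by blast
    have "[:-\<alpha>,1:] dvd R" using a by (simp add: dvd_iff_poly_eq_0)
    then obtain R1 where R1: "R = [:-\<alpha>,1:] * R1" by (elim dvdE)
    have "[:-\<alpha>,1:] dvd S" using less.prems(3)[OF a] by (simp add: dvd_iff_poly_eq_0)
    then obtain S1 where S1: "S = [:-\<alpha>,1:] * S1" by (elim dvdE)
    have R10: "R1 \<noteq> 0" using less.prems(1) R1 by auto
    have "degree R = degree [:-\<alpha>,1:] + degree R1" unfolding R1 using R10 by (intro degree_mult_eq) auto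
    hence degR1: "degree R1 < degree R" by simp
    have oR1: "order \<gamma> R1 \<le> 1" for \<gamma>
    proof -
      have "R1 dvd R" unfolding R1 by (rule dvd_triv_right)
      from dvd_imp_order_le[OF less.prems(1) this, of \<gamma>] less.prems(2)[of \<gamma>] show ?thesis by linarith
    qed
    have "order \<alpha> R = order \<alpha> [:-\<alpha>,1:] + order \<alpha> R1" using less.prems(1) R1 order_mult by metis
    moreover have "order \<alpha> [:-\<alpha>,1:] = 1" using order_power_n_n[of \<alpha> 1] by simp
    ultimately have "order \<alpha> R1 = 0" using less.prems(2)[of \<alpha>] by simp
    hence nr: "poly R1 \<alpha> \<noteq> 0" using R10 by (simp add: order_eq_0_iff)
    have "poly S1 \<gamma> = 0" if "poly R1 \<gamma> = 0" for \<gamma>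
    proof -
      have "\<gamma> \<noteq> \<alpha>" using nr that by auto
      moreover have "poly S \<gamma> = 0" using less.prems(3)[of \<gamma>] that R1 by simp
      ultimately show ?thesis unfolding S1 by simp
    qed
    hence "R1 dvd S1" using less.hyps[OF degR1 R10 oR1] by blast
    thus ?thesis unfolding R1 S1 by (rule mult_dvd_mono[OF dvd_refl])
  qed
qed


lemma coeff_lin_pow:
  fixes b :: complex
  shows "coeff ([:b,1:]^k) i = of_nat (k choose i) * b^(k-i)"
proof -
  have "[:b,1:] = monom 1 1 + [:b:]" by (simp add: monom_Suc)
  hence "[:b,1:]^k = (\<Sum>j\<le>k. of_nat (k choose j) * monom 1 1 ^ j * [:b:]^(k-j))"
    by (simp add: binomial_ring)
  also have "\<dots> = (\<Sum>j\<le>k. monom (of_nat (k choose j) * b^(k-j)) j)"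
  proof (intro sum.cong refl)
    fix j
    have "of_nat (k choose j) * monom (1::complex) 1 ^ j * [:b:]^(k-j)
      = [:of_nat (k choose j):] * [:b^(k-j):] * monom 1 j"
      by (simp add: monom_power poly_const_pow of_nat_poly ac_simps)
    also have "\<dots> = monom (of_nat (k choose j) * b^(k-j)) j"
      by (simp add: smult_monom)
    finally show "of_nat (k choose j) * monom (1::complex) 1 ^ j * [:b:]^(k-j) = monom (of_nat (k choose j) * b^(k-j)) j" .
  qed
  finally have "coeff ([:b,1:]^k) i = (\<Sum>j\<le>k. if j = i then of_nat (k choose j) * b^(k-j) else 0)"
    by (simp add: coeff_sum coeff_monom)
  also have "\<dots> = of_nat (k choose i) * b^(k-i)"
    by (cases "i \<le> k") (auto simp: sum.delta)
  finally show ?thesis .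
qed

lemma choose_id: "(k - i) * (k choose i) = (i + 1) * (k choose (i + 1))"
  using binomial_absorb_comp[of k i] binomial_absorption[of i k] by simp

lemma rel_from_binom:
  fixes c b :: complex
  assumes S: "S = smult c ([:b,1:]^k)" and i: "i < k"
  shows "of_nat (k * (k - i)) * coeff S i * coeff S k = of_nat (i + 1) * coeff S (k - 1) * coeff S (i + 1)"
proof -
  have ch: "of_nat (k - i) * (of_nat (k choose i) :: complex) = of_nat (i + 1) * of_nat (k choose (i + 1))"
    using choose_id[of k i] by (metis of_nat_mult)
  have e1: "b^(k-i) = b * b^(k - (i+1))" using i by (metis Suc_diff_Suc add.commute plus_1_eq_Suc power_Suc)
  have "k - (k - 1) = 1" using i by simp
  moreover have "k choose (k - 1) = k" using binomial_symmetric[of 1 k] i by simp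
  ultimately have "coeff S (k-1) = c * of_nat k * b" unfolding S using i by (simp add: coeff_lin_pow)
  moreover have "coeff S k = c" unfolding S by (simp add: coeff_lin_pow)
  moreover have "coeff S i = c * of_nat (k choose i) * b^(k-i)" unfolding S by (simp add: coeff_lin_pow)
  moreover have "coeff S (i+1) = c * of_nat (k choose (i+1)) * b^(k-(i+1))" unfolding S by (simp add: coeff_lin_pow)
  ultimately show ?thesis
  proof -
    assume a: "coeff S (k-1) = c * of_nat k * b" "coeff S k = c"
      "coeff S i = c * of_nat (k choose i) * b^(k-i)" "coeff S (i+1) = c * of_nat (k choose (i+1)) * b^(k-(i+1))"
    have "of_nat (k * (k - i)) * coeff S i * coeff S k
       = c * c * of_nat k * b^(k-(i+1)) * b * (of_nat (k - i) * of_nat (k choose i))"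
      unfolding a e1 by (simp add: ac_simps)
    also have "\<dots> = c * c * of_nat k * b^(k-(i+1)) * b * (of_nat (i + 1) * of_nat (k choose (i + 1)))"
      unfolding ch ..
    also have "\<dots> = of_nat (i + 1) * coeff S (k - 1) * coeff S (i + 1)"
      unfolding a by (simp add: ac_simps)
    finally show ?thesis .
  qed
qed

lemma binom_from_rel:
  fixes s :: "nat \<Rightarrow> complex"
  assumes k: "1 \<le> k" and sk: "s k \<noteq> 0"
    and rel: "\<And>i. i < k \<Longrightarrow> of_nat (k * (k - i)) * s i * s k = of_nat (i + 1) * s (k - 1) * s (i + 1)"
  defines "b \<equiv> s (k - 1) / (of_nat k * s k)"
  shows "(\<Sum>i\<le>k. monom (s i) i) = smult (s k) ([:b,1:]^k)"
proof -
  have kk: "of_nat k \<noteq> (0::complex)" using k by simp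
  have skm1: "s (k - 1) = of_nat k * b * s k" unfolding b_def using kk sk by (simp add: field_simps)
  have main: "s (k - j) = s k * of_nat (k choose (k - j)) * b^j" if "j \<le> k" for j
    using that
  proof (induction j)
    case 0 thus ?case by simp
  next
    case (Suc j)
    define i where "i = k - Suc j"
    have i: "i < k" "k - i = Suc j" "i + 1 = k - j" using Suc.prems unfolding i_def by auto
    have IH: "s (i + 1) = s k * of_nat (k choose (i + 1)) * b^j" using Suc.IH Suc.prems i by simp
    have "of_nat k * s k * (of_nat (k - i) * s i)
        = of_nat k * s k * (s k * b^Suc j * (of_nat (i+1) * of_nat (k choose (i+1))))"
      using rel[OF i(1)] unfolding skm1 IH by (simp add: ac_simps)
    also have "of_nat (i+1) * of_nat (k choose (i+1)) = of_nat (k - i) * (of_nat (k choose i) :: complex)"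
      using choose_id[of k i] by (metis of_nat_mult)
    finally have eq: "of_nat (k - i) * s i = of_nat (k - i) * (s k * of_nat (k choose i) * b^Suc j)"
      using kk sk by (simp add: ac_simps)
    have nz: "of_nat (k - i) \<noteq> (0::complex)" using i(1) by (simp only: of_nat_eq_0_iff)
    have "s i = s k * of_nat (k choose i) * b^Suc j" using eq mult_left_cancel[OF nz] by blast
    thus ?case unfolding i_def[symmetric] using Suc.prems binomial_symmetric[of i k] i
      by (simp add: i_def)
  qed
  show ?thesis
  proof (rule poly_eqI)
    fix n
    have "coeff (\<Sum>i\<le>k. monom (s i) i) n = (if n \<le> k then s n else 0)"
      by (simp add: coeff_sum coeff_monom)
    also have "\<dots> = s k * of_nat (k choose n) * b^(k-n)"
    proof (cases "n \<le> k")
      case True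
      with main[of "k - n"] show ?thesis by (simp add: binomial_symmetric[OF True, symmetric])
    qed simp
    also have "\<dots> = coeff (smult (s k) ([:b,1:]^k)) n" by (simp add: coeff_lin_pow)
    finally show "coeff (\<Sum>i\<le>k. monom (s i) i) n = coeff (smult (s k) ([:b,1:]^k)) n" .
  qed
qed


lemma lc_facts:
  fixes f :: "rat poly poly"
  assumes d2: "degree f \<ge> 2" and lc: "degree (lead_coeff f) = 0" "lead_coeff f \<noteq> 0"
  shows "degree (map_poly (ev a) f) = degree f"
    and "degree (map_poly (ev a) (pderiv f)) = degree (pderiv f)"
    and "degree (pderiv f) = degree f - 1"
    and "pderiv f \<noteq> 0"
    and "ev a (lead_coeff (pderiv f)) \<noteq> 0"
proof -
  obtain c where c: "lead_coeff f = [:c:]" "c \<noteq> 0" using lc by (metis degree_eq_zeroE pCons_0_0)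
  have e1: "ev a (lead_coeff f) \<noteq> 0" using c by (simp add: ev_const)
  show "degree (map_poly (ev a) f) = degree f" by (rule degree_map_ev[OF e1])
  show dp: "degree (pderiv f) = degree f - 1" by (rule degree_pderiv)
  have "lead_coeff (pderiv f) = of_nat (degree f) * lead_coeff f"
    unfolding dp coeff_pderiv using d2 by simp
  also have "\<dots> = [:of_nat (degree f) * c:]" using c by (simp add: of_nat_poly)
  finally have lp: "lead_coeff (pderiv f) = [:of_nat (degree f) * c:]" .
  show e2: "ev a (lead_coeff (pderiv f)) \<noteq> 0" unfolding lp using c d2 by (simp add: ev_const)
  show "degree (map_poly (ev a) (pderiv f)) = degree (pderiv f)" by (rule degree_map_ev[OF e2])
  show "pderiv f \<noteq> 0" using d2 by (simp add: pderiv_eq_0_iff)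
qed

lemma sr_top:
  fixes f :: "rat poly poly"
  assumes d2: "degree f \<ge> 2" and lc: "degree (lead_coeff f) = 0" "lead_coeff f \<noteq> 0"
  shows "ev a (sr f (degree f - 1) (degree f - 1)) \<noteq> 0"
proof -
  note lf = lc_facts[OF assms]
  define F where "F = map_poly (ev a) f"
  define G where "G = map_poly (ev a) (pderiv f)"
  have dF: "degree F = degree f" and dG: "degree G = degree f - 1"
    using lf unfolding F_def G_def by auto
  have "ev a (sr f (degree f - 1) (degree f - 1)) = subres_coeff F G (degree f - 1) (degree f - 1)"
    unfolding F_def G_def by (rule sr_ev) (use lf in auto)
  also have "\<dots> = subres_matrix F G (degree f - 1) 0 (degree f - 1)"
    unfolding subres_coeff_def Let_def dF dG using d2
    by (subst det_single) auto
  also have "\<dots> = lead_coeff G" unfolding subres_matrix_def dG by simp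
  also have "lead_coeff G = ev a (lead_coeff (pderiv f))"
    unfolding G_def using lf by (simp add: coeff_map_ev)
  finally show ?thesis using lf by simp
qed

lemma Phi_dvd_Suc: "Phi f (Suc i) dvd Phi f i" by simp

lemma Phi_mono: "j \<le> i \<Longrightarrow> Phi f i dvd Phi f j"
proof (induction i)
  case (Suc i)
  thus ?case by (metis Phi_dvd_Suc dvd_refl dvd_trans le_Suc_eq)
qed simp

lemma Phi_dvd_sr: "1 \<le> j \<Longrightarrow> j \<le> i \<Longrightarrow> Phi f i dvd sr f j j"
proof -
  assume j: "1 \<le> j" "j \<le> i"
  have "Phi f j dvd sr f j j" using j by (cases j) auto
  thus ?thesis using Phi_mono[OF j(2)] dvd_trans by blast
qed

lemma Phi0_dvd: "Phi f 0 dvd sr f 0 0"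
  by (metis Phi.simps(1) dvd_def dvd_div_mult_self gcd_dvd1 mult.commute)

lemma Gamma_mult: "1 \<le> k \<Longrightarrow> Phi f (k - 1) = Gamma f k * Phi f k"
proof -
  assume k: "1 \<le> k"
  have "Phi f k dvd Phi f (k - 1)" using k Phi_dvd_Suc[of f "k - 1"] by simp
  thus ?thesis unfolding Gamma_def by simp
qed

lemma ev_gcd_zero:
  assumes "ev a x = 0" "ev a y = 0" shows "ev a (gcd x y) = 0"
proof -
  have "gcd x y = fst (bezout_coefficients x y) * x + snd (bezout_coefficients x y) * y"
    by (simp add: bezout_coefficients_fst_snd)
  thus ?thesis using assms by (simp add: evh.hom_add evh.hom_mult)
qed


lemma sr00_nz:
  fixes f :: "rat poly poly"
  assumes sf: "squarefree f" and d2: "degree f \<ge> 2" and lc: "degree (lead_coeff f) = 0" "lead_coeff f \<noteq> 0"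
  shows "sr f 0 0 \<noteq> 0"
proof -
  note lf = lc_facts[OF d2 lc]
  have "degree (pderiv f) < degree f" using lf d2 by simp
  thus ?thesis unfolding sr_def
    by (rule subres_coprime_nonzero) (use lf coprime_pderiv_bivar[OF sf lc] in auto)
qed

lemma Phi0_props:
  fixes f :: "rat poly poly"
  assumes sf: "squarefree f" and d2: "degree f \<ge> 2" and lc: "degree (lead_coeff f) = 0" "lead_coeff f \<noteq> 0"
  shows "Phi f 0 \<noteq> 0" "order \<alpha> (mapc (Phi f 0)) \<le> 1"
    "ev \<alpha> (sr f 0 0) = 0 \<Longrightarrow> ev \<alpha> (Phi f 0) = 0"
proof -
  define P where "P = sr f 0 0"
  have P0: "P \<noteq> 0" unfolding P_def by (rule sr00_nz[OF assms])
  have Phi0: "Phi f 0 = P div gcd P (pderiv P)" unfolding P_def by simp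
  have PQ: "P = Phi f 0 * gcd P (pderiv P)" unfolding Phi0 by simp
  show nz: "Phi f 0 \<noteq> 0" using P0 PQ by auto
  have mnz: "mapc (Phi f 0) \<noteq> 0" using nz by (simp add: mapc_eq_0)
  show "order \<alpha> (mapc (Phi f 0)) \<le> 1"
  proof (cases "poly (mapc P) \<alpha> = 0")
    case True
    show ?thesis unfolding Phi0 using sqf_part_order[OF P0 True] by simp
  next
    case False
    have "mapc (Phi f 0) dvd mapc P" by (rule mapc_dvd_mono) (use PQ in \<open>metis dvd_triv_left\<close>)
    hence "poly (mapc (Phi f 0)) \<alpha> \<noteq> 0" using False by (metis dvd_def mult_zero_left poly_mult)
    thus ?thesis by (simp add: order_0I)
  qed
  assume r: "ev \<alpha> (sr f 0 0) = 0"
  hence "poly (mapc P) \<alpha> = 0" unfolding P_def ev_def .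
  hence "order \<alpha> (mapc (Phi f 0)) = 1" unfolding Phi0 by (rule sqf_part_order[OF P0])
  thus "ev \<alpha> (Phi f 0) = 0" unfolding ev_def using order_root by fastforce
qed

lemma Phi_nz:
  fixes f :: "rat poly poly"
  assumes sf: "squarefree f" and d2: "degree f \<ge> 2" and lc: "degree (lead_coeff f) = 0" "lead_coeff f \<noteq> 0"
  shows "Phi f i \<noteq> 0"
  using Phi_mono[of 0 i f] Phi0_props(1)[OF assms] by auto

lemma Gamma_order:
  fixes f :: "rat poly poly"
  assumes sf: "squarefree f" and d2: "degree f \<ge> 2" and lc: "degree (lead_coeff f) = 0" "lead_coeff f \<noteq> 0"
    and k: "1 \<le> k"
  shows "Gamma f k \<noteq> 0" "order \<alpha> (mapc (Gamma f k)) \<le> 1"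
    "ev \<alpha> (Gamma f k) = 0 \<Longrightarrow> ev \<alpha> (Phi f k) \<noteq> 0"
proof -
  have GM: "Phi f (k - 1) = Gamma f k * Phi f k" by (rule Gamma_mult[OF k])
  have P1: "Phi f (k - 1) \<noteq> 0" by (rule Phi_nz[OF sf d2 lc])
  show G0: "Gamma f k \<noteq> 0" using GM P1 by auto
  have P0: "mapc (Phi f 0) \<noteq> 0" using Phi0_props(1)[OF sf d2 lc] by (simp add: mapc_eq_0)
  have "mapc (Phi f (k - 1)) dvd mapc (Phi f 0)" by (rule mapc_dvd_mono[OF Phi_mono]) simp
  hence o1: "order \<alpha> (mapc (Phi f (k - 1))) \<le> 1"
    using dvd_imp_order_le[OF P0] Phi0_props(2)[OF sf d2 lc, of \<alpha>] by (meson order_trans)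
  have Pk1: "mapc (Phi f (k - 1)) = mapc (Gamma f k) * mapc (Phi f k)" unfolding GM mapc_mult ..
  have nz: "mapc (Gamma f k) * mapc (Phi f k) \<noteq> 0" using P1 by (simp add: Pk1[symmetric] mapc_eq_0)
  have om: "order \<alpha> (mapc (Phi f (k - 1))) = order \<alpha> (mapc (Gamma f k)) + order \<alpha> (mapc (Phi f k))"
    unfolding Pk1 using nz by (rule order_mult)
  show "order \<alpha> (mapc (Gamma f k)) \<le> 1" using o1 om by simp
  assume "ev \<alpha> (Gamma f k) = 0"
  hence "order \<alpha> (mapc (Gamma f k)) \<ge> 1" using nz unfolding ev_def
    by (metis mult_eq_0_iff order_root less_one not_less)
  hence "order \<alpha> (mapc (Phi f k)) = 0" using o1 om by simp
  thus "ev \<alpha> (Phi f k) \<noteq> 0" unfolding ev_def using nz by (simp add: order_root)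
qed


lemma eval2_ev: "eval2 f a b = poly (map_poly (ev a) f) b"
  unfolding eval2_def ev_def mapc_def ..

lemma ev_dvd_zero: "x dvd y \<Longrightarrow> ev a x = 0 \<Longrightarrow> ev a y = 0"
  by (metis dvdE evh.hom_mult mult_zero_left)

lemma ev_rel: "ev a (of_nat (k * (k - i)) * sr f k i * sr f k k - of_nat (i + 1) * sr f k (k - 1) * sr f k (i + 1))
  = of_nat (k * (k - i)) * ev a (sr f k i) * ev a (sr f k k) - of_nat (i + 1) * ev a (sr f k (k - 1)) * ev a (sr f k (i + 1))"
  by (simp only: evh.hom_mult evh.hom_minus evh.hom_of_nat)

lemma S_degree:
  fixes s :: "nat \<Rightarrow> 'a::comm_ring_1"
  shows "degree (\<Sum>j\<le>k. monom (s j) j) \<le> k" "coeff (\<Sum>j\<le>k. monom (s j) j) i = (if i \<le> k then s i else 0)"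
proof -
  show c: "coeff (\<Sum>j\<le>k. monom (s j) j) i = (if i \<le> k then s i else 0)" for i
    by (simp add: coeff_sum coeff_monom)
  show "degree (\<Sum>j\<le>k. monom (s j) j) \<le> k" by (rule degree_le) (simp add: c)
qed

lemma K1:
  fixes f :: "rat poly poly"
  assumes sf: "squarefree f" and d2: "degree f \<ge> 2" and lc: "degree (lead_coeff f) = 0" "lead_coeff f \<noteq> 0"
    and gp: "generic_position_x f"
    and k: "1 \<le> k" "k \<le> degree f - 1" and i: "i < k" and r: "ev \<alpha> (Gamma f k) = 0"
  shows "ev \<alpha> (of_nat (k * (k - i)) * sr f k i * sr f k k - of_nat (i + 1) * sr f k (k - 1) * sr f k (i + 1)) = 0"
proof -
  note lf = lc_facts[OF d2 lc]
  define F where "F = map_poly (ev \<alpha>) f"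
  define G where "G = map_poly (ev \<alpha>) (pderiv f)"
  have dF: "degree F = degree f" and dG: "degree G = degree f - 1"
    using lf unfolding F_def G_def by auto
  have sev: "ev \<alpha> (sr f k' j) = subres_coeff F G k' j" for k' j
    unfolding F_def G_def by (rule sr_ev) (use lf in auto)
  have G0: "G \<noteq> 0"
  proof
    assume "G = 0"
    hence "degree G = 0" by simp
    with dG d2 show False by simp
  qed
  have GF: "degree G < degree F" using dF dG d2 by simp
  have Pk1: "ev \<alpha> (Phi f (k - 1)) = 0" using Gamma_mult[OF k(1), of f] r by (simp add: evh.hom_mult)
  have Pk: "ev \<alpha> (Phi f k) \<noteq> 0" by (rule Gamma_order(3)[OF sf d2 lc k(1) r])
  have srkk: "ev \<alpha> (sr f k k) \<noteq> 0"
  proof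
    assume "ev \<alpha> (sr f k k) = 0"
    hence "ev \<alpha> (gcd (Phi f (k - 1)) (sr f k k)) = 0" using Pk1 by (rule ev_gcd_zero[rotated])
    moreover have "Phi f k = gcd (Phi f (k - 1)) (sr f k k)" using k(1) by (cases k) auto
    ultimately show False using Pk by simp
  qed
  have srjj: "ev \<alpha> (sr f j j) = 0" if j: "j < k" for j
  proof (cases "j = 0")
    case True
    have "Phi f (k - 1) dvd sr f 0 0" using Phi_mono[of 0 "k - 1" f] Phi0_dvd[of f] dvd_trans by blast
    thus ?thesis using Pk1 True ev_dvd_zero by blast
  next
    case False
    have "Phi f (k - 1) dvd sr f j j" using False j by (intro Phi_dvd_sr) auto
    thus ?thesis using Pk1 ev_dvd_zero by blast
  qed
  define D where "D = gcd F G"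
  define g where "g = degree D"
  have D0: "D \<noteq> 0" unfolding D_def using G0 by simp
  have gnz: "subres_coeff F G g g \<noteq> 0" unfolding g_def D_def by (rule subres_gcd_nonzero[OF GF G0])
  have gk: "k \<le> g"
  proof (rule ccontr)
    assume "\<not> k \<le> g"
    hence "ev \<alpha> (sr f g g) = 0" using srjj by simp
    thus False using gnz sev by simp
  qed
  define S where "S = (\<Sum>j\<le>k. monom (subres_coeff F G k j) j)"
  have DS: "D dvd S" unfolding S_def D_def by (rule subres_dvd) (use k dG GF in auto)
  have cS: "coeff S j = (if j \<le> k then subres_coeff F G k j else 0)" for j
    unfolding S_def by (rule S_degree(2))
  have cSk: "coeff S k \<noteq> 0" using cS srkk sev by simp
  hence S0: "S \<noteq> 0" by auto
  have degS: "degree S = k"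
  proof (rule antisym)
    show "degree S \<le> k" unfolding S_def by (rule S_degree(1))
    show "k \<le> degree S" using cSk by (rule le_degree)
  qed
  have "g \<le> degree S" unfolding g_def using DS S0 by (rule dvd_imp_degree_le)
  hence gk': "g = k" using gk degS by simp
  obtain t where t: "S = D * t" using DS by (elim dvdE)
  have t0: "t \<noteq> 0" using S0 t by auto
  have "degree S = degree D + degree t" unfolding t using D0 t0 by (rule degree_mult_eq)
  hence degt: "degree t = 0" using degS gk' g_def by simp
  then obtain t0' where t0': "t = [:t0':]" by (metis degree_eq_zeroE)
  have uniq: "\<gamma> = \<delta>" if "poly D \<gamma> = 0" "poly D \<delta> = 0" for \<gamma> \<delta>
  proof -
    have "D dvd F" "D dvd G" unfolding D_def by auto
    hence "poly F \<gamma> = 0" "poly G \<gamma> = 0" "poly F \<delta> = 0" "poly G \<delta> = 0" using that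
      by (auto elim!: dvdE)
    thus ?thesis using gp unfolding generic_position_x_def eval2_ev F_def G_def by blast
  qed
  have "\<not> constant (poly D)" using gk' k g_def by (simp add: constant_degree)
  then obtain \<beta> where \<beta>: "poly D \<beta> = 0" using fundamental_theorem_of_algebra by blast
  obtain m R where R: "D = [:-\<beta>,1:]^m * R" "\<not> [:-\<beta>,1:] dvd R"
    using order_decomp[OF D0] by blast
  have R0: "R \<noteq> 0" using R D0 by auto
  have "degree R = 0"
  proof (rule ccontr)
    assume "degree R \<noteq> 0"
    hence "\<not> constant (poly R)" by (simp add: constant_degree)
    then obtain \<gamma> where \<gamma>: "poly R \<gamma> = 0" using fundamental_theorem_of_algebra by blast
    hence "poly D \<gamma> = 0" unfolding R(1) by simp
    hence "\<gamma> = \<beta>" using uniq \<beta> by blast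
    with \<gamma> R(2) show False by (simp add: dvd_iff_poly_eq_0)
  qed
  then obtain r0 where r0: "R = [:r0:]" by (metis degree_eq_zeroE)
  have "degree D = degree ([:-\<beta>,1:]^m) + degree R"
    unfolding R(1) by (rule degree_mult_eq) (use R0 in auto)
  hence "degree D = m" using \<open>degree R = 0\<close> by (simp add: degree_linear_power)
  hence oD: "m = k" using gk' g_def by simp
  have Sform: "S = smult (r0 * t0') ([:-\<beta>,1:]^k)"
    unfolding t R(1) r0 t0' oD by (simp add: ac_simps)
  have "of_nat (k * (k - i)) * coeff S i * coeff S k = of_nat (i + 1) * coeff S (k - 1) * coeff S (i + 1)"
    by (rule rel_from_binom[OF Sform i])
  hence "of_nat (k * (k - i)) * ev \<alpha> (sr f k i) * ev \<alpha> (sr f k k) = of_nat (i + 1) * ev \<alpha> (sr f k (k - 1)) * ev \<alpha> (sr f k (i + 1))"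
    using i by (simp add: cS sev)
  thus ?thesis unfolding ev_rel by simp
qed


lemma K2:
  fixes f :: "rat poly poly"
  assumes sf: "squarefree f" and d2: "degree f \<ge> 2" and lc: "degree (lead_coeff f) = 0" "lead_coeff f \<noteq> 0"
    and H: "\<forall>k \<in> {1..degree f - 1}. \<forall>i < k.
       Gamma f k dvd
         (of_nat (k * (k - i)) * sr f k i * sr f k k
          - of_nat (i + 1) * sr f k (k - 1) * sr f k (i + 1))"
  shows "generic_position_x f"
  unfolding generic_position_x_def
proof (intro allI impI)
  fix \<alpha> b1 b2
  assume roots: "eval2 f \<alpha> b1 = 0 \<and> eval2 (pderiv f) \<alpha> b1 = 0 \<and> eval2 f \<alpha> b2 = 0 \<and> eval2 (pderiv f) \<alpha> b2 = 0"
  note lf = lc_facts[OF d2 lc]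
  define F where "F = map_poly (ev \<alpha>) f"
  define G where "G = map_poly (ev \<alpha>) (pderiv f)"
  have dF: "degree F = degree f" and dG: "degree G = degree f - 1"
    using lf unfolding F_def G_def by auto
  have sev: "ev \<alpha> (sr f k' j) = subres_coeff F G k' j" for k' j
    unfolding F_def G_def by (rule sr_ev) (use lf in auto)
  have GF: "degree G < degree F" using dF dG d2 by simp
  have rt: "poly F b = 0 \<and> poly G b = 0" if "b = b1 \<or> b = b2" for b
    using roots that unfolding eval2_ev F_def G_def by auto
  have lin: "[:-b,1:] dvd F \<and> [:-b,1:] dvd G" if "b = b1 \<or> b = b2" for b
    using rt[OF that] by (simp add: dvd_iff_poly_eq_0)
  have sr00: "ev \<alpha> (sr f 0 0) = 0"
  proof -
    have "[:-b1,1:] dvd (\<Sum>j\<le>0. monom (subres_coeff F G 0 j) j)"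
      by (rule subres_dvd) (use GF lin[of b1] in auto)
    hence "poly [:subres_coeff F G 0 0:] b1 = 0" by (simp add: dvd_iff_poly_eq_0 poly_monom)
    thus ?thesis using sev by simp
  qed
  have P0: "ev \<alpha> (Phi f 0) = 0" by (rule Phi0_props(3)[OF sf d2 lc sr00])
  have Ptop: "ev \<alpha> (Phi f (degree f - 1)) \<noteq> 0"
  proof
    assume "ev \<alpha> (Phi f (degree f - 1)) = 0"
    moreover have "Phi f (degree f - 1) dvd sr f (degree f - 1) (degree f - 1)"
      by (rule Phi_dvd_sr) (use d2 in auto)
    ultimately have "ev \<alpha> (sr f (degree f - 1) (degree f - 1)) = 0" using ev_dvd_zero by blast
    thus False using sr_top[OF d2 lc] by blast
  qed
  define k where "k = (LEAST k. ev \<alpha> (Phi f k) \<noteq> 0)"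
  have Pk: "ev \<alpha> (Phi f k) \<noteq> 0" unfolding k_def by (rule LeastI[of _ "degree f - 1"]) (rule Ptop)
  have kle: "k \<le> degree f - 1" unfolding k_def by (rule Least_le) (rule Ptop)
  have k1: "1 \<le> k" using Pk P0 by (cases k) auto
  have Pk1: "ev \<alpha> (Phi f (k - 1)) = 0"
  proof -
    have "k - 1 < k" using k1 by simp
    thus ?thesis unfolding k_def using not_less_Least by blast
  qed
  have srkk: "ev \<alpha> (sr f k k) \<noteq> 0"
  proof
    assume "ev \<alpha> (sr f k k) = 0"
    hence "ev \<alpha> (gcd (Phi f (k - 1)) (sr f k k)) = 0" using Pk1 by (rule ev_gcd_zero[rotated])
    moreover have "Phi f k = gcd (Phi f (k - 1)) (sr f k k)" using k1 by (cases k) auto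
    ultimately show False using Pk by simp
  qed
  have Gk: "ev \<alpha> (Gamma f k) = 0"
  proof -
    have "ev \<alpha> (Gamma f k) * ev \<alpha> (Phi f k) = 0"
      using Pk1 Gamma_mult[OF k1, of f] by (simp add: evh.hom_mult)
    thus ?thesis using Pk by simp
  qed
  define s where "s = (\<lambda>j. ev \<alpha> (sr f k j))"
  have rel: "of_nat (k * (k - i)) * s i * s k = of_nat (i + 1) * s (k - 1) * s (i + 1)" if i: "i < k" for i
  proof -
    have "Gamma f k dvd (of_nat (k * (k - i)) * sr f k i * sr f k k
          - of_nat (i + 1) * sr f k (k - 1) * sr f k (i + 1))" using H k1 kle i by auto
    hence "ev \<alpha> (of_nat (k * (k - i)) * sr f k i * sr f k k
          - of_nat (i + 1) * sr f k (k - 1) * sr f k (i + 1)) = 0" using Gk ev_dvd_zero by blast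
    thus ?thesis unfolding ev_rel s_def by simp
  qed
  define b where "b = s (k - 1) / (of_nat k * s k)"
  have Sform: "(\<Sum>i\<le>k. monom (s i) i) = smult (s k) ([:b,1:]^k)"
    unfolding b_def by (rule binom_from_rel[OF k1]) (use srkk s_def rel in auto)
  have sS: "(\<Sum>i\<le>k. monom (s i) i) = (\<Sum>j\<le>k. monom (subres_coeff F G k j) j)"
    unfolding s_def sev ..
  have eqb: "bb = - b" if bb: "bb = b1 \<or> bb = b2" for bb
  proof -
    have "[:-bb,1:] dvd (\<Sum>j\<le>k. monom (subres_coeff F G k j) j)"
      by (rule subres_dvd) (use GF lin[OF bb] kle dG in auto)
    hence "poly (smult (s k) ([:b,1:]^k)) bb = 0" unfolding sS[symmetric] Sform
      by (simp add: dvd_iff_poly_eq_0)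
    moreover have "s k \<noteq> 0" using srkk unfolding s_def .
    ultimately have "(b + bb)^k = 0" by simp
    hence "b + bb = 0" by simp
    thus ?thesis by (simp add: add_eq_0_iff)
  qed
  show "b1 = b2" using eqb[of b1] eqb[of b2] by simp
qed

theorem theorem3:
  fixes f :: "rat poly poly"
  assumes "squarefree f"
    and "degree f \<ge> 2"
    and "degree (lead_coeff f) = 0" and "lead_coeff f \<noteq> 0"
  shows "generic_position_x f \<longleftrightarrow>
    (\<forall>k \<in> {1..degree f - 1}. \<forall>i < k.
       Gamma f k dvd
         (of_nat (k * (k - i)) * sr f k i * sr f k k
          - of_nat (i + 1) * sr f k (k - 1) * sr f k (i + 1)))"
proof
  assume gp: "generic_position_x f"
  show "\<forall>k \<in> {1..degree f - 1}. \<forall>i < k.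
       Gamma f k dvd
         (of_nat (k * (k - i)) * sr f k i * sr f k k
          - of_nat (i + 1) * sr f k (k - 1) * sr f k (i + 1))"
  proof (intro ballI allI impI)
    fix k i assume k: "k \<in> {1..degree f - 1}" and i: "i < k"
    let ?r = "of_nat (k * (k - i)) * sr f k i * sr f k k - of_nat (i + 1) * sr f k (k - 1) * sr f k (i + 1)"
    have k1: "1 \<le> k" using k by simp
    have "mapc (Gamma f k) dvd mapc ?r"
    proof (rule dvd_by_roots)
      show "mapc (Gamma f k) \<noteq> 0" using Gamma_order(1)[OF assms k1] by (simp add: mapc_eq_0)
      show "order \<alpha> (mapc (Gamma f k)) \<le> 1" for \<alpha> by (rule Gamma_order(2)[OF assms k1])
      show "poly (mapc ?r) \<alpha> = 0" if "poly (mapc (Gamma f k)) \<alpha> = 0" for \<alpha>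
        using K1[OF assms gp k1 _ i, of \<alpha>] k that unfolding ev_def by auto
    qed
    thus "Gamma f k dvd ?r" by (rule mapc_dvd)
  qed
next
  assume "\<forall>k \<in> {1..degree f - 1}. \<forall>i < k.
       Gamma f k dvd
         (of_nat (k * (k - i)) * sr f k i * sr f k k
          - of_nat (i + 1) * sr f k (k - 1) * sr f k (i + 1))"
  thus "generic_position_x f" by (rule K2[OF assms])
qed


end
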